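(* Let $\mathfrak{g}$ be a nilpotent Lie algebra over $\mathbb{R}$ of dimension $2p+1$ admitting a contact form, i.e. a linear form $\omega\in\mathfrak{g}^*$ with $\omega\wedge(d\omega)^p\neq 0$, where $d\omega(X,Y)=-\omega([X,Y])$. Then the quotient Lie algebra $\mathfrak{g}/Z(\mathfrak{g})$ (where $Z(\mathfrak{g})$ is the center of $\mathfrak{g}$) is a symplectic Lie algebra.
   Context: A symplectic Lie algebra is a Lie algebra $\mathfrak{h}$ equipped with a nondegenerate skew-symmetric bilinear form $\theta$ which is a $2$-cocycle, i.e. $\theta([X,Y],Z)+\theta([Y,Z],X)+\theta([Z,X],Y)=0$ for all $X,Y,Z\in\mathfrak{h}$. *)

theory Defs
  imports "HOL-Analysis.Analysis"
begin

definition lie_algebra :: "('a::real_vector \<Rightarrow> 'a \<Rightarrow> 'a) \<Rightarrow> bool" where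
  "lie_algebra br \<longleftrightarrow>
     (\<forall>x y z. br (x + y) z = br x z + br y z) \<and>
     (\<forall>x y z. br x (y + z) = br x y + br x z) \<and>
     (\<forall>c x y. br (c *\<^sub>R x) y = c *\<^sub>R br x y) \<and>
     (\<forall>c x y. br x (c *\<^sub>R y) = c *\<^sub>R br x y) \<and>
     (\<forall>x. br x x = 0) \<and>
     (\<forall>x y z. br x (br y z) + br y (br z x) + br z (br x y) = 0)"

fun lower_central :: "('a::real_vector \<Rightarrow> 'a \<Rightarrow> 'a) \<Rightarrow> nat \<Rightarrow> 'a set" where
  "lower_central br 0 = UNIV"
| "lower_central br (Suc k) = span {br x y | x y. y \<in> lower_central br k}"

definition nilpotent_lie :: "('a::real_vector \<Rightarrow> 'a \<Rightarrow> 'a) \<Rightarrow> bool" where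
  "nilpotent_lie br \<longleftrightarrow> (\<exists>k. lower_central br k = {0})"

definition lie_center :: "('a::real_vector \<Rightarrow> 'a \<Rightarrow> 'a) \<Rightarrow> 'a set" where
  "lie_center br = {z. \<forall>x. br z x = 0}"

definition d_form :: "('a \<Rightarrow> 'a \<Rightarrow> 'a) \<Rightarrow> ('a \<Rightarrow> real) \<Rightarrow> 'a \<Rightarrow> 'a \<Rightarrow> real" where
  "d_form br \<omega> X Y = - \<omega> (br X Y)"

text \<open>The (2p+1)-form \<omega> \<and> (d\<omega>)^p evaluated on vectors v 0, ..., v (2p),
  via the shuffle formula (up to the positive normalisation constant p! 2^p,
  which is irrelevant for nonvanishing).\<close>
definition contact_top_form ::
  "('a \<Rightarrow> 'a \<Rightarrow> 'a) \<Rightarrow> ('a \<Rightarrow> real) \<Rightarrow> nat \<Rightarrow> (nat \<Rightarrow> 'a) \<Rightarrow> real" where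
  "contact_top_form br \<omega> p v =
     (\<Sum>\<sigma> | \<sigma> permutes {0..2*p}.
        of_int (sign \<sigma>) * \<omega> (v (\<sigma> 0)) *
        (\<Prod>i\<in>{1..p}. d_form br \<omega> (v (\<sigma> (2*i - 1))) (v (\<sigma> (2*i)))))"

definition is_contact_form ::
  "('a::real_vector \<Rightarrow> 'a \<Rightarrow> 'a) \<Rightarrow> nat \<Rightarrow> ('a \<Rightarrow> real) \<Rightarrow> bool" where
  "is_contact_form br p \<omega> \<longleftrightarrow> linear \<omega> \<and> (\<exists>v. contact_top_form br \<omega> p v \<noteq> 0)"

text \<open>Quotient by a subspace Z: elements are the cosets x + Z.\<close>
definition coset :: "'a set \<Rightarrow> 'a::real_vector \<Rightarrow> 'a set" where
  "coset Z x = (\<lambda>z. x + z) ` Z"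

text \<open>A symplectic form on the quotient Lie algebra g/Z, with its operations
  induced from g: (x+Z)+(y+Z) = (x+y)+Z, c(x+Z) = cx+Z, [x+Z,y+Z] = [x,y]+Z.\<close>
definition symplectic_quotient ::
  "('a::real_vector \<Rightarrow> 'a \<Rightarrow> 'a) \<Rightarrow> 'a set \<Rightarrow> ('a set \<Rightarrow> 'a set \<Rightarrow> real) \<Rightarrow> bool" where
  "symplectic_quotient br Z \<theta> \<longleftrightarrow>
     (\<forall>x y z. \<theta> (coset Z (x + y)) (coset Z z) = \<theta> (coset Z x) (coset Z z) + \<theta> (coset Z y) (coset Z z)) \<and>
     (\<forall>c x y. \<theta> (coset Z (c *\<^sub>R x)) (coset Z y) = c * \<theta> (coset Z x) (coset Z y)) \<and>
     (\<forall>x y. \<theta> (coset Z x) (coset Z y) = - \<theta> (coset Z y) (coset Z x)) \<and>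
     (\<forall>x. (\<forall>y. \<theta> (coset Z x) (coset Z y) = 0) \<longrightarrow> coset Z x = coset Z 0) \<and>
     (\<forall>x y z. \<theta> (coset Z (br x y)) (coset Z z) + \<theta> (coset Z (br y z)) (coset Z x)
              + \<theta> (coset Z (br z x)) (coset Z y) = 0)"

definition symplectic_quotient_lie :: "('a::real_vector \<Rightarrow> 'a \<Rightarrow> 'a) \<Rightarrow> 'a set \<Rightarrow> bool" where
  "symplectic_quotient_lie br Z \<longleftrightarrow> (\<exists>\<theta>. symplectic_quotient br Z \<theta>)"

end

theory Submission
  imports Defs
begin

lemma la_props:
  assumes "lie_algebra br"
  shows "linear (\<lambda>x. br x y)" "linear (br y)" "br x y = - br y x"
proof -
  have a: "\<And>x y z. br (x + y) z = br x z + br y z"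
     and b: "\<And>x y z. br x (y + z) = br x y + br x z"
     and c: "\<And>c x y. br (c *\<^sub>R x) y = c *\<^sub>R br x y"
     and d: "\<And>c x y. br x (c *\<^sub>R y) = c *\<^sub>R br x y"
     and e: "\<And>x. br x x = 0"
    using assms unfolding lie_algebra_def by blast+
  show "linear (\<lambda>x. br x y)" by (rule linearI) (simp_all add: a c)
  show "linear (br y)" by (rule linearI) (simp_all add: b d)
  have "0 = br (x + y) (x + y)" using e by simp
  also have "\<dots> = br x y + br y x" unfolding a b by (simp add: e)
  finally have "br x y + br y x = 0" by simp
  thus "br x y = - br y x" by (simp add: eq_neg_iff_add_eq_0)
qed

lemma linear_prod_slot:
  fixes f :: "nat \<Rightarrow> 'a::real_vector \<Rightarrow> real"
  assumes "finite I" "i0 \<in> I" "linear (f i0)" "\<And>i x y. i \<in> I - {i0} \<Longrightarrow> f i x = f i y"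
  shows "linear (\<lambda>x. \<Prod>i\<in>I. f i x)"
proof -
  define c where "c = (\<Prod>i\<in>I-{i0}. f i 0)"
  have "(\<Prod>i\<in>I. f i x) = f i0 x * c" for x
  proof -
    have "(\<Prod>i\<in>I. f i x) = f i0 x * (\<Prod>i\<in>I-{i0}. f i x)"
      using assms(1,2) by (simp add: prod.remove)
    also have "(\<Prod>i\<in>I-{i0}. f i x) = c" unfolding c_def
      by (rule prod.cong) (use assms(4) in auto)
    finally show ?thesis .
  qed
  moreover have "linear (\<lambda>x. f i0 x * c)"
    by (intro linearI) (simp_all add: linear_add[OF assms(3)] linear_scale[OF assms(3)] algebra_simps)
  ultimately show ?thesis by simp
qed

lemma ctf_alt:
  assumes "i \<in> {0..2*p}" "j \<in> {0..2*p}" "i \<noteq> j" "v i = v j"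
  shows "contact_top_form br \<omega> p v = 0"
proof -
  let ?S = "{\<sigma>. \<sigma> permutes {0..2*p}}"
  define g where "g \<sigma> = of_int (sign \<sigma>) * \<omega> (v (\<sigma> 0)) *
        (\<Prod>i\<in>{1..p}. d_form br \<omega> (v (\<sigma> (2*i - 1))) (v (\<sigma> (2*i))))" for \<sigma>
  define \<tau> where "\<tau> = Transposition.transpose i j"
  have vt: "v (\<tau> x) = v x" for x
    unfolding \<tau>_def using assms(4) by (cases "x = i"; cases "x = j") auto
  have g: "g (\<tau> \<circ> \<sigma>) = - g \<sigma>" if "\<sigma> \<in> ?S" for \<sigma>
  proof -
    have "sign (\<tau> \<circ> \<sigma>) = sign \<tau> * sign \<sigma>"
      using sign_compose[OF permutation_swap_id permutes_imp_permutation[of "{0..2*p}" \<sigma>]] that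
      unfolding \<tau>_def by auto
    also have "\<dots> = - sign \<sigma>" unfolding \<tau>_def using assms(3) by (simp add: sign_swap_id)
    finally show ?thesis unfolding g_def by (simp add: vt)
  qed
  have "sum g ?S = sum (\<lambda>\<sigma>. g (\<tau> \<circ> \<sigma>)) ?S"
    by (rule sum.reindex_bij_witness[where i="\<lambda>\<sigma>. \<tau> \<circ> \<sigma>" and j="\<lambda>\<sigma>. \<tau> \<circ> \<sigma>"])
       (use assms in \<open>auto simp: \<tau>_def permutes_compose permutes_swap_id comp_assoc[symmetric]\<close>)
  also have "\<dots> = - sum g ?S" by (simp add: g sum_negf)
  finally have "sum g ?S = 0" by simp
  thus ?thesis unfolding contact_top_form_def g_def .
qed

lemma dform_linear:
  assumes la: "lie_algebra br" and lw: "linear \<omega>"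
  shows "linear (\<lambda>x. d_form br \<omega> x c)" "linear (\<lambda>x. d_form br \<omega> c x)"
proof -
  have l1: "linear (\<lambda>x. br x c)" and l2: "linear (br c)" using la_props(1,2)[OF la] by auto
  show "linear (\<lambda>x. d_form br \<omega> x c)" unfolding d_form_def
    by (intro linearI) (simp_all add: linear_add[OF l1] linear_add[OF lw] linear_scale[OF l1] linear_scale[OF lw])
  show "linear (\<lambda>x. d_form br \<omega> c x)" unfolding d_form_def
    by (intro linearI) (simp_all add: linear_add[OF l2] linear_add[OF lw] linear_scale[OF l2] linear_scale[OF lw])
qed

lemma ctf_slot_linear:
  assumes la: "lie_algebra br" and lw: "linear \<omega>" and j: "j \<in> {0..2*p}"
  shows "linear (\<lambda>x. contact_top_form br \<omega> p (v(j:=x)))"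
proof -
  let ?S = "{\<sigma>. \<sigma> permutes {0..2*p}}"
  define G where "G \<sigma> x i = (if i = 0 then \<omega> ((v(j:=x)) (\<sigma> 0))
      else d_form br \<omega> ((v(j:=x)) (\<sigma> (2*i - 1))) ((v(j:=x)) (\<sigma> (2*i))))"
    for \<sigma> :: "nat \<Rightarrow> nat" and x and i :: nat
  have eq: "contact_top_form br \<omega> p (v(j:=x)) = (\<Sum>\<sigma>\<in>?S. of_int (sign \<sigma>) * (\<Prod>i\<in>{0..p}. G \<sigma> x i))" for x
    unfolding contact_top_form_def
  proof (rule sum.cong[OF refl])
    fix \<sigma> assume "\<sigma> \<in> ?S"
    have "(\<Prod>i\<in>{0..p}. G \<sigma> x i) = G \<sigma> x 0 * (\<Prod>i\<in>{1..p}. G \<sigma> x i)"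
      by (simp add: prod.atLeast_Suc_atMost)
    also have "(\<Prod>i\<in>{1..p}. G \<sigma> x i) = (\<Prod>i\<in>{1..p}. d_form br \<omega> ((v(j:=x)) (\<sigma> (2*i - 1))) ((v(j:=x)) (\<sigma> (2*i))))"
      by (rule prod.cong) (auto simp: G_def)
    finally show "of_int (sign \<sigma>) * \<omega> ((v(j:=x)) (\<sigma> 0)) *
        (\<Prod>i\<in>{1..p}. d_form br \<omega> ((v(j:=x)) (\<sigma> (2*i - 1))) ((v(j:=x)) (\<sigma> (2*i))))
       = of_int (sign \<sigma>) * (\<Prod>i\<in>{0..p}. G \<sigma> x i)"
      by (simp add: G_def)
  qed
  have lin: "linear (\<lambda>x. of_int (sign \<sigma>) * (\<Prod>i\<in>{0..p}. G \<sigma> x i))" if s: "\<sigma> \<in> ?S" for \<sigma>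
  proof -
    define k where "k = inv \<sigma> j"
    have perm: "\<sigma> permutes {0..2*p}" using s by simp
    have sk: "\<sigma> m = j \<longleftrightarrow> m = k" for m
      unfolding k_def using permutes_inverses[OF perm] by metis
    have kS: "k \<in> {0..2*p}" unfolding k_def using permutes_in_image[OF permutes_inv[OF perm]] j by auto
    have vj: "(v(j:=x)) (\<sigma> m) = (if m = k then x else v (\<sigma> m))" for m x
      using sk by auto
    define i0 where "i0 = (if k = 0 then 0 else (k+1) div 2)"
    have i0I: "i0 \<in> {0..p}" unfolding i0_def using kS by auto
    have const: "G \<sigma> x i = G \<sigma> y i" if "i \<in> {0..p} - {i0}" for i x y
    proof -
      have "i = 0 \<Longrightarrow> k \<noteq> 0" using that unfolding i0_def by (auto split: if_splits)
      moreover have "i \<noteq> 0 \<Longrightarrow> 2*i - 1 \<noteq> k \<and> 2*i \<noteq> k" using that unfolding i0_def by auto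
      ultimately show ?thesis unfolding G_def vj by auto
    qed
    have li0: "linear (\<lambda>x. G \<sigma> x i0)"
    proof (cases "k = 0")
      case True
      then have "(\<lambda>x. G \<sigma> x i0) = \<omega>" unfolding G_def i0_def vj by auto
      then show ?thesis using lw by simp
    next
      case False
      then have i0: "i0 \<noteq> 0" "k = 2*i0 - 1 \<or> k = 2*i0" unfolding i0_def by auto
      have ne: "2*i0 \<noteq> 2*i0 - Suc 0" "2*i0 - Suc 0 \<noteq> 2*i0" using i0(1) by auto
      show ?thesis
      proof (cases "k = 2*i0 - 1")
        case True
        then have "(\<lambda>x. G \<sigma> x i0) = (\<lambda>x. d_form br \<omega> x (v (\<sigma> (2*i0))))"
          unfolding G_def vj using i0 ne by auto
        then show ?thesis using dform_linear[OF la lw] by simp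
      next
        case False
        then have "(\<lambda>x. G \<sigma> x i0) = (\<lambda>x. d_form br \<omega> (v (\<sigma> (2*i0 - 1))) x)"
          unfolding G_def vj using i0 ne by auto
        then show ?thesis using dform_linear[OF la lw] by simp
      qed
    qed
    have L: "linear (\<lambda>x. \<Prod>i\<in>{0..p}. G \<sigma> x i)"
      by (rule linear_prod_slot[of "{0..p}" i0]) (use i0I li0 const in auto)
    show ?thesis
      by (intro linearI) (simp_all add: linear_add[OF L] linear_scale[OF L] algebra_simps)
  qed
  have "linear (\<lambda>x. \<Sum>\<sigma>\<in>?S. of_int (sign \<sigma>) * (\<Prod>i\<in>{0..p}. G \<sigma> x i))"
    by (rule linear_compose_sum) (use lin in auto)
  then show ?thesis unfolding eq .
qed

lemma ker_trivial:
  fixes br :: "'a::euclidean_space \<Rightarrow> 'a \<Rightarrow> 'a" and v :: "nat \<Rightarrow> 'a"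
  assumes la: "lie_algebra br" and lw: "linear \<omega>" and dim: "DIM('a) = 2*p+1"
    and nz: "contact_top_form br \<omega> p v \<noteq> 0"
    and k0: "\<omega> k = 0" and kd: "\<And>y. \<omega> (br k y) = 0"
  shows "k = 0"
proof (rule ccontr)
  assume kn: "k \<noteq> 0"
  have l1: "linear (\<lambda>x. br x y)" and l2: "linear (br y)" for y using la_props(1,2)[OF la] by auto
  have kd2: "\<omega> (br y k) = 0" for y
    using kd[of y] la_props(3)[OF la, of y k] linear_neg[OF lw] by simp
  define u where "u m = v m - ((k \<bullet> v m)/(k \<bullet> k)) *\<^sub>R k" for m
  have ku: "k \<bullet> u m = 0" for m using kn unfolding u_def by (simp add: inner_diff_right)
  have om: "\<omega> (u m) = \<omega> (v m)" for m
    unfolding u_def by (simp add: linear_diff[OF lw] linear_scale[OF lw] k0)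
  have dd: "d_form br \<omega> (u a) (u b) = d_form br \<omega> (v a) (v b)" for a b
  proof -
    define ca where "ca = (k \<bullet> v a)/(k \<bullet> k)"
    define cb where "cb = (k \<bullet> v b)/(k \<bullet> k)"
    have "br (u a) (u b) = br (v a) (u b) - ca *\<^sub>R br k (u b)"
      unfolding u_def[of a] ca_def[symmetric] using linear_diff[OF l1] linear_scale[OF l1] by simp
    then have "\<omega> (br (u a) (u b)) = \<omega> (br (v a) (u b))"
      by (simp add: linear_diff[OF lw] linear_scale[OF lw] kd)
    also have "br (v a) (u b) = br (v a) (v b) - cb *\<^sub>R br (v a) k"
      unfolding u_def[of b] cb_def[symmetric] using linear_diff[OF l2] linear_scale[OF l2] by simp
    then have "\<omega> (br (v a) (u b)) = \<omega> (br (v a) (v b))"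
      by (simp add: linear_diff[OF lw] linear_scale[OF lw] kd2)
    finally show ?thesis unfolding d_form_def by simp
  qed
  have Fu: "contact_top_form br \<omega> p u = contact_top_form br \<omega> p v"
    unfolding contact_top_form_def by (simp add: om dd)
  have "contact_top_form br \<omega> p u = 0"
  proof (cases "inj_on u {0..2*p}")
    case False
    then obtain i j where "i \<in> {0..2*p}" "j \<in> {0..2*p}" "i \<noteq> j" "u i = u j"
      unfolding inj_on_def by blast
    then show ?thesis by (rule ctf_alt)
  next
    case True
    let ?U = "u ` {0..2*p}"
    have cU: "card ?U = 2*p+1" using card_image[OF True] by simp
    have UH: "?U \<subseteq> {x. k \<bullet> x = 0}" using ku by auto
    have "dependent ?U"
    proof (rule ccontr)
      assume "independent ?U"
      then have "card ?U \<le> dim {x. k \<bullet> x = 0}" using independent_card_le_dim[OF UH] by simp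
      also have "\<dots> = 2*p" using dim_hyperplane[OF kn] dim by simp
      finally show False using cU by simp
    qed
    then obtain a where aU: "a \<in> ?U" and asp: "a \<in> span (?U - {a})" unfolding dependent_def by blast
    then obtain j where j: "j \<in> {0..2*p}" "a = u j" by blast
    have "finite (?U - {a})" by simp
    from span_finite[OF this] asp obtain c where ac: "a = (\<Sum>w\<in>?U - {a}. c w *\<^sub>R w)" by auto
    have L: "linear (\<lambda>x. contact_top_form br \<omega> p (u(j:=x)))" by (rule ctf_slot_linear[OF la lw j(1)])
    have "contact_top_form br \<omega> p u = contact_top_form br \<omega> p (u(j := (\<Sum>w\<in>?U - {a}. c w *\<^sub>R w)))"
      using ac j(2) by (metis fun_upd_triv)
    also have "\<dots> = (\<Sum>w\<in>?U - {a}. c w * contact_top_form br \<omega> p (u(j:=w)))"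
      using linear_sum[OF L, of "\<lambda>w. c w *\<^sub>R w" "?U - {a}"] linear_scale[OF L] by simp
    also have "\<dots> = 0"
    proof (rule sum.neutral, rule ballI)
      fix w assume w: "w \<in> ?U - {a}"
      then obtain i where i: "i \<in> {0..2*p}" "w = u i" by blast
      have "i \<noteq> j" using w i j by auto
      then have "contact_top_form br \<omega> p (u(j:=w)) = 0"
        using ctf_alt[of i p j "u(j:=w)"] i j by auto
      then show "c w * contact_top_form br \<omega> p (u(j:=w)) = 0" by simp
    qed
    finally show ?thesis .
  qed
  then show False using Fu nz by simp
qed

lemma center_nonzero:
  fixes br :: "'a::euclidean_space \<Rightarrow> 'a \<Rightarrow> 'a"
  assumes la: "lie_algebra br" and nil: "nilpotent_lie br"
  shows "\<exists>z. z \<noteq> 0 \<and> z \<in> lie_center br"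
proof -
  obtain n where n: "lower_central br n = {0}" using nil unfolding nilpotent_lie_def by blast
  obtain b :: 'a where b: "b \<in> Basis" using nonempty_Basis by blast
  then have "b \<noteq> 0" by auto
  then have P0: "lower_central br 0 \<noteq> {0}" by auto
  have "\<exists>m. lower_central br m \<noteq> {0} \<and> lower_central br (Suc m) = {0}"
    if "lower_central br n = {0}" for n
    using that
  proof (induction n)
    case 0 then show ?case using P0 by simp
  next
    case (Suc n)
    then show ?case by (cases "lower_central br n = {0}") auto
  qed
  then obtain m where m: "lower_central br m \<noteq> {0}" "lower_central br (Suc m) = {0}"
    using n by blast
  have "0 \<in> lower_central br m"
  proof (cases m)
    case 0 then show ?thesis by simp
  next
    case (Suc m') then show ?thesis by (simp add: span_zero)
  qed
  then obtain y where y: "y \<in> lower_central br m" "y \<noteq> 0" using m(1) by blast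
  have "br x y = 0" for x
  proof -
    have "br x y \<in> span {br x y | x y. y \<in> lower_central br m}"
      by (rule span_base) (use y in blast)
    then show ?thesis using m(2) by simp
  qed
  then have "br y x = 0" for x using la_props(3)[OF la, of y x] by simp
  then show ?thesis using y unfolding lie_center_def by blast
qed

theorem mainTheorem1:
  fixes br :: "'a::euclidean_space \<Rightarrow> 'a \<Rightarrow> 'a" and p :: nat and \<omega> :: "'a \<Rightarrow> real"
  assumes "lie_algebra br"
    and "nilpotent_lie br"
    and "DIM('a) = 2 * p + 1"
    and "is_contact_form br p \<omega>"
  shows "symplectic_quotient_lie br (lie_center br)"
proof -
  note la = assms(1)
  obtain v where lw: "linear \<omega>" and nz: "contact_top_form br \<omega> p v \<noteq> 0"
    using assms(4) unfolding is_contact_form_def by blast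
  define Z where "Z = lie_center br"
  have l1: "linear (\<lambda>x. br x y)" and l2: "linear (br y)" for y using la_props(1,2)[OF la] by auto
  have skew: "br x y = - br y x" for x y using la_props(3)[OF la] .
  have zc1: "br z y = 0" if "z \<in> Z" for z y using that unfolding Z_def lie_center_def by blast
  have zc2: "br y z = 0" if "z \<in> Z" for z y using zc1[OF that, of y] skew[of y z] by simp
  have Z0: "0 \<in> Z" unfolding Z_def lie_center_def using linear_0[OF l1] by auto
  have Zadd: "a + b \<in> Z" if "a \<in> Z" "b \<in> Z" for a b
    using that unfolding Z_def lie_center_def by (simp add: linear_add[OF l1])
  have Zsc: "c *\<^sub>R a \<in> Z" if "a \<in> Z" for a c
    using that unfolding Z_def lie_center_def by (simp add: linear_scale[OF l1])
  have Zdiff: "a - b \<in> Z" if "a \<in> Z" "b \<in> Z" for a b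
    using Zadd[OF that(1) Zsc[OF that(2), of "-1"]] by simp
  have coset_eq: "x' - x \<in> Z" if "coset Z x = coset Z x'" for x x'
  proof -
    have "x' \<in> coset Z x'" unfolding coset_def using Z0 by force
    then have "x' \<in> coset Z x" using that by simp
    then obtain z where "z \<in> Z" "x' = x + z" unfolding coset_def by blast
    then show ?thesis by simp
  qed
  define \<theta> where "\<theta> A B = \<omega> (br (SOME x. A = coset Z x) (SOME y. B = coset Z y))" for A B
  have key: "\<theta> (coset Z x) (coset Z y) = \<omega> (br x y)" for x y
  proof -
    define x' where "x' = (SOME x'. coset Z x = coset Z x')"
    define y' where "y' = (SOME y'. coset Z y = coset Z y')"
    have "coset Z x = coset Z x'" unfolding x'_def by (rule someI[of _ x]) simp
    then have zx: "x' - x \<in> Z" by (rule coset_eq)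
    have "coset Z y = coset Z y'" unfolding y'_def by (rule someI[of _ y]) simp
    then have zy: "y' - y \<in> Z" by (rule coset_eq)
    have a: "\<And>x y z. br (x + y) z = br x z + br y z"
      and b: "\<And>x y z. br x (y + z) = br x y + br x z" using la unfolding lie_algebra_def by blast+
    have "br x' y' = br (x + (x' - x)) (y + (y' - y))" by simp
    also have "\<dots> = br x y + br x (y' - y) + (br (x' - x) y + br (x' - x) (y' - y))"
      unfolding a b by simp
    also have "\<dots> = br x y"
      using zc1[OF zx] zc2[OF zy] by simp
    finally show ?thesis unfolding \<theta>_def x'_def[symmetric] y'_def[symmetric] by simp
  qed
  obtain z0 where z0: "z0 \<noteq> 0" "z0 \<in> Z" using center_nonzero[OF la assms(2)] unfolding Z_def by blast
  have oz0: "\<omega> z0 \<noteq> 0"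
  proof
    assume "\<omega> z0 = 0"
    moreover have "\<And>y. \<omega> (br z0 y) = 0" using zc1[OF z0(2)] linear_0[OF lw] by simp
    ultimately have "z0 = 0" using ker_trivial[OF la lw assms(3) nz] by blast
    then show False using z0 by simp
  qed
  have cosetZ: "coset Z x = Z" if "x \<in> Z" for x
  proof
    show "coset Z x \<subseteq> Z" unfolding coset_def using Zadd[OF that] by auto
    show "Z \<subseteq> coset Z x"
    proof
      fix w assume "w \<in> Z"
      then have "w - x \<in> Z" using Zdiff that by blast
      then show "w \<in> coset Z x" unfolding coset_def by (rule rev_image_eqI) simp
    qed
  qed
  have nondeg: "coset Z x = coset Z 0" if h: "\<forall>y. \<omega> (br x y) = 0" for x
  proof -
    define c where "c = \<omega> x / \<omega> z0"
    define k where "k = x - c *\<^sub>R z0"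
    have "\<omega> k = 0" unfolding k_def c_def using oz0 by (simp add: linear_diff[OF lw] linear_scale[OF lw])
    moreover have "\<omega> (br k y) = 0" for y
      unfolding k_def using h zc1[OF z0(2)]
      by (simp add: linear_diff[OF l1] linear_scale[OF l1] linear_diff[OF lw] linear_scale[OF lw] linear_0[OF lw])
    ultimately have "k = 0" using ker_trivial[OF la lw assms(3) nz] by blast
    then have "x = c *\<^sub>R z0" unfolding k_def by simp
    then have "x \<in> Z" using Zsc[OF z0(2)] by simp
    then show ?thesis using cosetZ Z0 by simp
  qed
  have jac: "br x (br y z) + br y (br z x) + br z (br x y) = 0" for x y z
    using la unfolding lie_algebra_def by blast
  have "symplectic_quotient br Z \<theta>"
    unfolding symplectic_quotient_def key
  proof (intro conjI allI impI)
    fix x y z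
    show "\<omega> (br (x + y) z) = \<omega> (br x z) + \<omega> (br y z)"
      by (simp add: linear_add[OF l1] linear_add[OF lw])
    show "\<omega> (br x y) = - \<omega> (br y x)"
      by (subst skew) (simp add: linear_neg[OF lw])
    have "\<omega> (br (br x y) z) + \<omega> (br (br y z) x) + \<omega> (br (br z x) y)
        = - \<omega> (br x (br y z) + br y (br z x) + br z (br x y))"
      using skew[of "br x y" z] skew[of "br y z" x] skew[of "br z x" y]
      by (simp add: linear_add[OF lw] linear_neg[OF lw])
    then show "\<omega> (br (br x y) z) + \<omega> (br (br y z) x) + \<omega> (br (br z x) y) = 0"
      by (simp add: jac linear_0[OF lw])
  next
    fix c x y
    show "\<omega> (br (c *\<^sub>R x) y) = c * \<omega> (br x y)"
      by (simp add: linear_scale[OF l1] linear_scale[OF lw])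
  next
    fix x assume "\<forall>y. \<omega> (br x y) = 0"
    then show "coset Z x = coset Z 0" by (rule nondeg)
  qed
  then show ?thesis unfolding symplectic_quotient_lie_def Z_def by blast
qed

end
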